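(* Let $L$ be a real Galois extension of $\mathbb{Q}$ with Galois group isomorphic to $\mathbb{Z}/2\mathbb{Z}\times\mathbb{Z}/2\mathbb{Z}$, let $u_1,u_2,u_3>1$ be the fundamental units of its three quadratic subfields, ordered so that $u_1<u_2<u_3$, and let $E=\{u_1^{m_1}u_2^{m_2}u_3^{m_3}:m_i\in\mathbb{Z}\}$. Put $X_1=\log u_2\log u_3$, $X_2=\log u_1\log u_3$, $X_3=\log u_1\log u_2$. For integers $n_1,n_2,n_3$ let $w=n_1\operatorname{LOG}(u_2)\wedge\operatorname{LOG}(u_3)+n_2\operatorname{LOG}(u_1)\wedge\operatorname{LOG}(u_3)+n_3\operatorname{LOG}(u_1)\wedge\operatorname{LOG}(u_2)$. Then $$\|w\|_1=4\big(\max\{|n_2X_2|,|n_3X_3|\}+\max\{|n_1X_1|,|n_2X_2|\}+\max\{|n_1X_1|,|n_3X_3|\}\big)\ge 8\max\{|n_1X_1|,|n_2X_2|,|n_3X_3|\},$$ and consequently every nonzero $w\in\bigwedge^2\operatorname{LOG}(E)$ satisfies $\|w\|_1\ge 8\log(u_1)\log(u_2)$.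
   Context: For a totally real number field $L$, $\operatorname{LOG}:\mathcal{O}_L^*\to\mathbb{R}^{\mathcal{A}_L}$, $\operatorname{LOG}(\gamma)=(\log|\tau(\gamma)|)_\tau$, indexed by the real embeddings $\tau$ of $L$. With the standard orthonormal basis $\{\delta^v\}$ of $\mathbb{R}^{\mathcal{A}_L}$ and $\delta^I=\delta^{v_1}\wedge\cdots\wedge\delta^{v_j}$ for $j$-subsets $I$, the 1-norm of $w=\sum_I c_I\delta^I\in\bigwedge^j\mathbb{R}^{\mathcal{A}_L}$ is $\|w\|_1=\sum_I|c_I|$. For a subgroup $H\subseteq\mathcal{O}_L^*$, $\bigwedge^2\operatorname{LOG}(H)$ is the subgroup generated by all $\operatorname{LOG}(a)\wedge\operatorname{LOG}(b)$ with $a,b\in H$. *)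

theory Defs
  imports Complex_Main "HOL-Computational_Algebra.Polynomial" "HOL-Algebra.Elementary_Groups"
begin

definition real_subfield :: "real set \<Rightarrow> bool" where
  "real_subfield K \<longleftrightarrow> 0 \<in> K \<and> 1 \<in> K \<and>
     (\<forall>x\<in>K. \<forall>y\<in>K. x + y \<in> K \<and> x * y \<in> K) \<and>
     (\<forall>x\<in>K. - x \<in> K \<and> inverse x \<in> K)"

definition field_auts :: "real set \<Rightarrow> (real \<Rightarrow> real) set" where
  "field_auts L = {\<sigma>. bij_betw \<sigma> L L \<and> (\<forall>x. x \<notin> L \<longrightarrow> \<sigma> x = 0) \<and> \<sigma> 1 = 1 \<and>
     (\<forall>x\<in>L. \<forall>y\<in>L. \<sigma> (x + y) = \<sigma> x + \<sigma> y \<and> \<sigma> (x * y) = \<sigma> x * \<sigma> y)}"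

text \<open>The automorphism group Aut(L) (= Aut(L/Q), since every automorphism fixes Q).\<close>
definition aut_group :: "real set \<Rightarrow> (real \<Rightarrow> real) monoid" where
  "aut_group L = \<lparr>carrier = field_auts L, mult = (\<lambda>\<sigma> \<tau> x. if x \<in> L then \<sigma> (\<tau> x) else 0),
                  one = (\<lambda>x. if x \<in> L then x else 0)\<rparr>"

definition galois_over_Q :: "real set \<Rightarrow> bool" where
  "galois_over_Q L \<longleftrightarrow> {x \<in> L. \<forall>\<sigma>\<in>field_auts L. \<sigma> x = x} = \<rat>"

definition real_embeddings :: "real set \<Rightarrow> (real \<Rightarrow> real) set" where
  "real_embeddings L = {\<tau>. (\<forall>x. x \<notin> L \<longrightarrow> \<tau> x = 0) \<and> \<tau> 1 = 1 \<and>
     (\<forall>x\<in>L. \<forall>y\<in>L. \<tau> (x + y) = \<tau> x + \<tau> y \<and> \<tau> (x * y) = \<tau> x * \<tau> y)}"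

text \<open>Quadratic subfield: subfield of L of degree 2 over Q, i.e. with a Q-basis {1, alpha}.\<close>
definition quadratic_subfield :: "real set \<Rightarrow> real set \<Rightarrow> bool" where
  "quadratic_subfield L K \<longleftrightarrow> real_subfield K \<and> K \<subseteq> L \<and>
     (\<exists>\<alpha>\<in>K. \<forall>x\<in>K. \<exists>!pq. fst pq \<in> \<rat> \<and> snd pq \<in> \<rat> \<and> x = fst pq + snd pq * \<alpha>)"

definition algebraic_integer :: "real \<Rightarrow> bool" where
  "algebraic_integer x \<longleftrightarrow> (\<exists>p :: int poly. lead_coeff p = 1 \<and> poly (map_poly of_int p) x = 0)"

definition int_units :: "real set \<Rightarrow> real set" where
  "int_units K = {x \<in> K. x \<noteq> 0 \<and> algebraic_integer x \<and> algebraic_integer (inverse x)}"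

definition fundamental_unit :: "real set \<Rightarrow> real \<Rightarrow> bool" where
  "fundamental_unit K u \<longleftrightarrow> u \<in> int_units K \<and> u > 1 \<and>
     (\<forall>v\<in>int_units K. \<exists>s::real. \<exists>m::int. (s = 1 \<or> s = -1) \<and> v = s * u powi m)"

definition LOG :: "real set \<Rightarrow> real \<Rightarrow> (real \<Rightarrow> real) \<Rightarrow> real" where
  "LOG L \<gamma> = (\<lambda>\<tau>. if \<tau> \<in> real_embeddings L then ln \<bar>\<tau> \<gamma>\<bar> else 0)"

text \<open>Bivectors in wedge^2 R^A are represented by their antisymmetric coefficient
  function B, with c_{v,w} = B v w the coefficient of delta^v wedge delta^w.\<close>
definition wedge :: "('a \<Rightarrow> real) \<Rightarrow> ('a \<Rightarrow> real) \<Rightarrow> 'a \<Rightarrow> 'a \<Rightarrow> real" where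
  "wedge x y = (\<lambda>v w. x v * y w - x w * y v)"

text \<open>1-norm: sum over 2-subsets {v,w} of |c_{v,w}|, i.e. half the sum over ordered pairs
  (the diagonal coefficients vanish).\<close>
definition norm1 :: "'a set \<Rightarrow> ('a \<Rightarrow> 'a \<Rightarrow> real) \<Rightarrow> real" where
  "norm1 A B = (\<Sum>I\<in>{I. I \<subseteq> A \<and> card I = 2}. \<bar>B (SOME v. v \<in> I) (SOME w. w \<in> I \<and> w \<noteq> (SOME v. v \<in> I))\<bar>)"

definition wedge2_LOG :: "real set \<Rightarrow> real set \<Rightarrow> ((real \<Rightarrow> real) \<Rightarrow> (real \<Rightarrow> real) \<Rightarrow> real) set" where
  "wedge2_LOG L H = {(\<lambda>v w. \<Sum>i<n. of_int (k i) * wedge (LOG L (a i)) (LOG L (b i)) v w)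
      | (n::nat) k a b. \<forall>i<n. a i \<in> H \<and> b i \<in> H}"

end

theory Submission
  imports Defs
begin


section \<open>Subfield basics\<close>

lemma rsf_add: "real_subfield K \<Longrightarrow> x \<in> K \<Longrightarrow> y \<in> K \<Longrightarrow> x + y \<in> K"
  and rsf_mult: "real_subfield K \<Longrightarrow> x \<in> K \<Longrightarrow> y \<in> K \<Longrightarrow> x * y \<in> K"
  and rsf_uminus: "real_subfield K \<Longrightarrow> x \<in> K \<Longrightarrow> - x \<in> K"
  and rsf_inverse: "real_subfield K \<Longrightarrow> x \<in> K \<Longrightarrow> inverse x \<in> K"
  and rsf_0: "real_subfield K \<Longrightarrow> 0 \<in> K"
  and rsf_1: "real_subfield K \<Longrightarrow> 1 \<in> K"
  by (auto simp: real_subfield_def)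

lemma rsf_diff: "real_subfield K \<Longrightarrow> x \<in> K \<Longrightarrow> y \<in> K \<Longrightarrow> x - y \<in> K"
  using rsf_add[of K x "-y"] rsf_uminus[of K y] by simp

lemma rsf_divide: "real_subfield K \<Longrightarrow> x \<in> K \<Longrightarrow> y \<in> K \<Longrightarrow> x / y \<in> K"
  using rsf_mult[of K x "inverse y"] rsf_inverse[of K y] by (simp add: divide_inverse)

lemma rsf_of_nat: "real_subfield K \<Longrightarrow> real n \<in> K"
  by (induction n) (auto intro: rsf_add rsf_0 rsf_1)

lemma rsf_of_int: "real_subfield K \<Longrightarrow> real_of_int n \<in> K"
proof (cases "n \<ge> 0")
  case True
  assume K: "real_subfield K"
  then show ?thesis using True rsf_of_nat[OF K, of "nat n"] by simp
next
  case False
  assume K: "real_subfield K"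
  then have "- real (nat (-n)) \<in> K" using rsf_of_nat[OF K] rsf_uminus[OF K] by blast
  then show ?thesis using False by simp
qed

lemma rsf_Rats: "real_subfield K \<Longrightarrow> \<rat> \<subseteq> K"
proof
  fix q :: real assume K: "real_subfield K" and "q \<in> \<rat>"
  then obtain a b where "q = real_of_int a / real_of_int b" by (auto elim: Rats_cases')
  then show "q \<in> K" using rsf_divide[OF K rsf_of_int[OF K] rsf_of_int[OF K]] by simp
qed

lemma rsf_power: "real_subfield K \<Longrightarrow> x \<in> K \<Longrightarrow> x ^ n \<in> K"
  by (induction n) (auto intro: rsf_mult rsf_1)

lemma rsf_sum: "real_subfield K \<Longrightarrow> (\<And>i. i \<in> S \<Longrightarrow> f i \<in> K) \<Longrightarrow> sum f S \<in> K"
  by (induction S rule: infinite_finite_induct) (auto intro: rsf_add rsf_0)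

section \<open>Embeddings\<close>

lemma emb_add: "\<tau> \<in> real_embeddings L \<Longrightarrow> x \<in> L \<Longrightarrow> y \<in> L \<Longrightarrow> \<tau> (x + y) = \<tau> x + \<tau> y"
  and emb_mult: "\<tau> \<in> real_embeddings L \<Longrightarrow> x \<in> L \<Longrightarrow> y \<in> L \<Longrightarrow> \<tau> (x * y) = \<tau> x * \<tau> y"
  and emb_1: "\<tau> \<in> real_embeddings L \<Longrightarrow> \<tau> 1 = 1"
  and emb_out: "\<tau> \<in> real_embeddings L \<Longrightarrow> x \<notin> L \<Longrightarrow> \<tau> x = 0"
  by (auto simp: real_embeddings_def)

context
  fixes L \<tau> assumes L: "real_subfield L" and t: "\<tau> \<in> real_embeddings L"
begin

lemma emb_0: "\<tau> 0 = 0"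
  using emb_add[OF t rsf_0[OF L] rsf_0[OF L]] by simp

lemma emb_uminus: "x \<in> L \<Longrightarrow> \<tau> (- x) = - \<tau> x"
  using emb_add[OF t, of x "-x"] rsf_uminus[OF L, of x] emb_0 by simp

lemma emb_diff: "x \<in> L \<Longrightarrow> y \<in> L \<Longrightarrow> \<tau> (x - y) = \<tau> x - \<tau> y"
  using emb_add[OF t, of x "-y"] rsf_uminus[OF L, of y] emb_uminus[of y] by simp

lemma emb_inverse: "x \<in> L \<Longrightarrow> \<tau> (inverse x) = inverse (\<tau> x)"
proof (cases "x = 0")
  case True then show ?thesis using emb_0 by simp
next
  case False
  assume x: "x \<in> L"
  have "\<tau> x * \<tau> (inverse x) = 1"
    using emb_mult[OF t x rsf_inverse[OF L x]] False emb_1[OF t] by simp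
  from inverse_unique[OF this] show ?thesis by simp
qed

lemma emb_divide: "x \<in> L \<Longrightarrow> y \<in> L \<Longrightarrow> \<tau> (x / y) = \<tau> x / \<tau> y"
  using emb_mult[OF t, of x "inverse y"] rsf_inverse[OF L, of y] emb_inverse[of y]
  by (simp add: divide_inverse)

lemma emb_of_nat: "\<tau> (real n) = real n"
proof (induction n)
  case 0 then show ?case using emb_0 by simp
next
  case (Suc n)
  have "\<tau> (1 + real n) = \<tau> 1 + \<tau> (real n)" by (rule emb_add[OF t rsf_1[OF L] rsf_of_nat[OF L]])
  then show ?case using Suc emb_1[OF t] by simp
qed

lemma emb_of_int: "\<tau> (real_of_int n) = real_of_int n"
proof (cases "n \<ge> 0")
  case True
  then have e: "real_of_int n = real (nat n)" by simp
  show ?thesis by (simp only: e emb_of_nat)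
next
  case False
  then have e: "real_of_int n = - real (nat (-n))" by simp
  show ?thesis by (simp only: e emb_uminus[OF rsf_of_nat[OF L]] emb_of_nat)
qed

lemma emb_Rats: "q \<in> \<rat> \<Longrightarrow> \<tau> q = q"
proof -
  assume "q \<in> \<rat>"
  then obtain a b where "q = real_of_int a / real_of_int b" by (auto elim: Rats_cases')
  then show ?thesis using emb_divide[OF rsf_of_int[OF L] rsf_of_int[OF L]] emb_of_int by simp
qed

lemma emb_power: "x \<in> L \<Longrightarrow> \<tau> (x ^ n) = \<tau> x ^ n"
proof (induction n)
  case 0 then show ?case using emb_1[OF t] by simp
next
  case (Suc n)
  have "\<tau> (x * x ^ n) = \<tau> x * \<tau> (x ^ n)" by (rule emb_mult[OF t Suc.prems rsf_power[OF L Suc.prems]])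
  then show ?case using Suc by simp
qed

lemma emb_powi: "x \<in> L \<Longrightarrow> \<tau> (x powi m) = \<tau> x powi m"
proof (cases "m \<ge> 0")
  case True
  assume x: "x \<in> L"
  then show ?thesis using True emb_power[OF x] by (simp add: power_int_def)
next
  case False
  assume x: "x \<in> L"
  have "\<tau> (inverse x ^ nat (- m)) = inverse (\<tau> x) ^ nat (- m)"
    using emb_power[OF rsf_inverse[OF L x]] emb_inverse[OF x] by simp
  then show ?thesis using False by (simp add: power_int_def)
qed

lemma emb_sum: "(\<And>i. i \<in> S \<Longrightarrow> f i \<in> L) \<Longrightarrow> \<tau> (sum f S) = (\<Sum>i\<in>S. \<tau> (f i))"
proof (induction S rule: infinite_finite_induct)
  case (infinite S) then show ?case using emb_0 by simp
next
  case empty then show ?case using emb_0 by simp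
next
  case (insert i F)
  have "\<tau> (f i + sum f F) = \<tau> (f i) + \<tau> (sum f F)"
    by (rule emb_add[OF t]) (use insert.prems in \<open>auto intro: rsf_sum[OF L]\<close>)
  then show ?case using insert by simp
qed

lemma emb_poly: "x \<in> L \<Longrightarrow> \<tau> (poly (map_poly of_int P) x) = poly (map_poly of_int P) (\<tau> x)"
proof -
  assume x: "x \<in> L"
  have c: "coeff (map_poly real_of_int P) i = real_of_int (coeff P i)" for i
    by (simp add: coeff_map_poly)
  have "\<tau> (poly (map_poly of_int P) x) = (\<Sum>i\<le>degree (map_poly real_of_int P). \<tau> (real_of_int (coeff P i) * x ^ i))"
    unfolding poly_altdef c
    by (rule emb_sum) (auto intro: rsf_mult rsf_of_int rsf_power L x)
  also have "\<dots> = (\<Sum>i\<le>degree (map_poly real_of_int P). real_of_int (coeff P i) * \<tau> x ^ i)"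
    by (intro sum.cong refl) (simp add: emb_mult[OF t] rsf_of_int[OF L] rsf_power[OF L x] emb_of_int emb_power x)
  finally show ?thesis unfolding poly_altdef c .
qed

lemma emb_alg: "x \<in> L \<Longrightarrow> algebraic_integer x \<Longrightarrow> algebraic_integer (\<tau> x)"
  unfolding algebraic_integer_def using emb_poly emb_0 by metis

end

lemma auts_emb: "field_auts L \<subseteq> real_embeddings L"
  by (auto simp: field_auts_def real_embeddings_def)

section \<open>Quadratic subfields\<close>

lemma quad_delta:
  assumes L: "real_subfield L" and Q: "quadratic_subfield L K"
  shows "\<exists>\<delta>. \<delta> \<in> K \<and> \<delta> \<notin> \<rat> \<and> \<delta> * \<delta> \<in> \<rat> \<and> K = {p + q * \<delta> | p q. p \<in> \<rat> \<and> q \<in> \<rat>}"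
proof -
  have K: "real_subfield K" and KL: "K \<subseteq> L" using Q by (auto simp: quadratic_subfield_def)
  obtain \<alpha> where a: "\<alpha> \<in> K" and rep0: "\<forall>x\<in>K. \<exists>!pq. fst pq \<in> \<rat> \<and> snd pq \<in> \<rat> \<and> x = fst pq + snd pq * \<alpha>"
    using Q unfolding quadratic_subfield_def by blast
  note rep = rep0[rule_format]
  have anr: "\<alpha> \<notin> \<rat>"
  proof
    assume aq: "\<alpha> \<in> \<rat>"
    obtain pq where pq: "\<forall>y. fst y \<in> \<rat> \<and> snd y \<in> \<rat> \<and> (0::real) = fst y + snd y * \<alpha> \<longrightarrow> y = pq"
      using rep[OF rsf_0[OF K]] by blast
    have "((0::real),(0::real)) = pq" using pq by auto
    moreover have "(\<alpha>, (-1::real)) = pq" using pq aq by auto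
    ultimately show False by auto
  qed
  obtain r s where rs: "r \<in> \<rat>" "s \<in> \<rat>" "\<alpha> * \<alpha> = r + s * \<alpha>"
    using ex1_implies_ex[OF rep[OF rsf_mult[OF K a a]]] by auto
  define \<delta> where "\<delta> = 2 * \<alpha> - s"
  have two: "(2::real) \<in> K" using rsf_Rats[OF K] by auto
  have sK: "s \<in> K" using rsf_Rats[OF K] rs by auto
  have dK: "\<delta> \<in> K" unfolding \<delta>_def by (rule rsf_diff[OF K rsf_mult[OF K two a] sK])
  have dnr: "\<delta> \<notin> \<rat>"
  proof
    assume "\<delta> \<in> \<rat>"
    then have "(\<delta> + s) / 2 \<in> \<rat>" using rs by auto
    then show False using anr by (simp add: \<delta>_def)
  qed
  have "\<delta> * \<delta> = 4 * (\<alpha> * \<alpha>) - 4 * s * \<alpha> + s * s" by (simp add: \<delta>_def algebra_simps)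
  also have "\<dots> = 4 * r + s * s" using rs(3) by simp
  finally have dd: "\<delta> * \<delta> = 4 * r + s * s" .
  have dq: "\<delta> * \<delta> \<in> \<rat>" unfolding dd using rs by simp
  have "K = {p + q * \<delta> | p q. p \<in> \<rat> \<and> q \<in> \<rat>}"
  proof
    show "K \<subseteq> {p + q * \<delta> | p q. p \<in> \<rat> \<and> q \<in> \<rat>}"
    proof
      fix x assume xK: "x \<in> K"
      obtain p q where pq: "p \<in> \<rat>" "q \<in> \<rat>" "x = p + q * \<alpha>" using ex1_implies_ex[OF rep[OF xK]] by auto
      have "x = (p + q * s / 2) + (q / 2) * \<delta>" unfolding \<delta>_def pq(3) by (simp add: algebra_simps)
      moreover have "p + q * s / 2 \<in> \<rat>" "q / 2 \<in> \<rat>" using pq rs by auto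
      ultimately show "x \<in> {p + q * \<delta> | p q. p \<in> \<rat> \<and> q \<in> \<rat>}"
        unfolding mem_Collect_eq by (intro exI[of _ "p + q * s / 2"] exI[of _ "q / 2"]) simp
    qed
  next
    show "{p + q * \<delta> | p q. p \<in> \<rat> \<and> q \<in> \<rat>} \<subseteq> K"
      using rsf_Rats[OF K] dK by (auto intro!: rsf_add[OF K] rsf_mult[OF K])
  qed
  with dK dnr dq show ?thesis by (intro exI[of _ \<delta>] conjI)
qed

lemma emb_delta:
  assumes L: "real_subfield L" and t: "\<tau> \<in> real_embeddings L" and d: "\<delta> \<in> L" "\<delta> * \<delta> \<in> \<rat>"
  shows "\<tau> \<delta> = \<delta> \<or> \<tau> \<delta> = - \<delta>"
proof -
  have "\<tau> \<delta> * \<tau> \<delta> = \<delta> * \<delta>" using emb_mult[OF t d(1) d(1)] emb_Rats[OF L t d(2)] by simp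
  then have "(\<tau> \<delta> - \<delta>) * (\<tau> \<delta> + \<delta>) = 0" by (simp add: algebra_simps)
  then show ?thesis by (auto simp: add_eq_0_iff)
qed


lemma poly_Rats:
  fixes E :: "real poly"
  shows "(\<forall>i. coeff E i \<in> \<int>) \<Longrightarrow> r \<in> \<rat> \<Longrightarrow> poly E r \<in> \<rat>"
proof (induction E rule: pCons_induct)
  case 0 then show ?case by simp
next
  case (pCons a p)
  have "a \<in> \<int>" using pCons.prems(1) by (metis coeff_pCons_0)
  moreover have "\<forall>i. coeff p i \<in> \<int>" using pCons.prems(1) by (metis coeff_pCons_Suc)
  ultimately show ?case using pCons by (auto simp: Ints_subset_Rats[THEN subsetD])
qed

lemma even_odd_split:
  fixes P :: "real poly"
  shows "(\<forall>i. coeff P i \<in> \<int>) \<Longrightarrow> \<exists>E Od. (\<forall>i. coeff E i \<in> \<int>) \<and> (\<forall>i. coeff Od i \<in> \<int>)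
     \<and> (\<forall>x. poly P x = poly E (x*x) + x * poly Od (x*x)) \<and> (P = 0 \<longrightarrow> E = 0 \<and> Od = 0)
     \<and> (P \<noteq> 0 \<longrightarrow> (if even (degree P) then lead_coeff E = lead_coeff P else lead_coeff Od = lead_coeff P))"
proof (induction P rule: pCons_induct)
  case 0
  show ?case by (rule exI[of _ 0], rule exI[of _ 0]) auto
next
  case (pCons a p)
  have aZ: "a \<in> \<int>" using pCons.prems(1) by (metis coeff_pCons_0)
  moreover have "\<forall>i. coeff p i \<in> \<int>" using pCons.prems(1) by (metis coeff_pCons_Suc)
  then obtain Ep Opp where IH: "\<forall>i. coeff Ep i \<in> \<int>" "\<forall>i. coeff Opp i \<in> \<int>"
    "\<forall>x. poly p x = poly Ep (x*x) + x * poly Opp (x*x)" "p = 0 \<longrightarrow> Ep = 0 \<and> Opp = 0"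
    "p \<noteq> 0 \<longrightarrow> (if even (degree p) then lead_coeff Ep = lead_coeff p else lead_coeff Opp = lead_coeff p)"
    using pCons.IH by blast
  show ?case
  proof (rule exI[of _ "pCons a Opp"], rule exI[of _ Ep], intro conjI)
    show "\<forall>i. coeff (pCons a Opp) i \<in> \<int>" using aZ IH(2) by (simp add: coeff_pCons split: nat.split)
    show "\<forall>i. coeff Ep i \<in> \<int>" by fact
    show "\<forall>x. poly (pCons a p) x = poly (pCons a Opp) (x * x) + x * poly Ep (x * x)"
      using IH(3) by (simp add: algebra_simps)
    show "pCons a p = 0 \<longrightarrow> pCons a Opp = 0 \<and> Ep = 0" using pCons.hyps by auto
    show "pCons a p \<noteq> 0 \<longrightarrow> (if even (degree (pCons a p)) then lead_coeff (pCons a Opp) = lead_coeff (pCons a p)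
        else lead_coeff Ep = lead_coeff (pCons a p))"
    proof (cases "p = 0")
      case True then show ?thesis using IH(4) by simp
    next
      case False
      then have dg: "degree (pCons a p) = Suc (degree p)" by simp
      show ?thesis
      proof (cases "even (degree p)")
        case True then show ?thesis using IH(5) False dg by (simp add: lead_coeff_pCons)
      next
        case odd: False
        then have "lead_coeff Opp = lead_coeff p" using IH(5) False by simp
        then have "Opp \<noteq> 0" using False by auto
        then show ?thesis using odd \<open>lead_coeff Opp = lead_coeff p\<close> False dg by (simp add: lead_coeff_pCons)
      qed
    qed
  qed
qed

lemma alg_sq:
  fixes x :: real
  assumes "algebraic_int x" "x * x \<in> \<rat>"
  shows "algebraic_int (x * x)"
proof (cases "x \<in> \<rat>")
  case True
  then have "x \<in> \<int>" using rational_algebraic_int_is_int assms(1) by blast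
  then have "x * x \<in> \<int>" by simp
  then show ?thesis by (rule int_imp_algebraic_int)
next
  case False
  obtain P :: "real poly" where P: "lead_coeff P = 1" "\<forall>i. coeff P i \<in> \<int>" "poly P x = 0"
    using assms(1) by (auto simp: algebraic_int.simps)
  obtain E Od where EO: "\<forall>i. coeff E i \<in> \<int>" "\<forall>i. coeff Od i \<in> \<int>"
     "\<forall>x. poly P x = poly E (x*x) + x * poly Od (x*x)"
     "P \<noteq> 0 \<longrightarrow> (if even (degree P) then lead_coeff E = lead_coeff P else lead_coeff Od = lead_coeff P)"
    using even_odd_split[OF P(2)] by blast
  have e: "poly E (x*x) + x * poly Od (x*x) = 0" using EO(3) P(3) by simp
  have qE: "poly E (x*x) \<in> \<rat>" and qO: "poly Od (x*x) \<in> \<rat>" using poly_Rats EO assms(2) by auto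
  have O0: "poly Od (x*x) = 0"
  proof (rule ccontr)
    assume "poly Od (x*x) \<noteq> 0"
    then have "x = - poly E (x*x) / poly Od (x*x)" using e by (simp add: field_simps)
    then have "x \<in> \<rat>" using qE qO by (metis Rats_divide Rats_minus_iff)
    then show False using False by simp
  qed
  then have E0: "poly E (x*x) = 0" using e by simp
  have "P \<noteq> 0" using P(1) by auto
  show ?thesis
  proof (cases "even (degree P)")
    case True
    then have "lead_coeff E = 1" using EO(4) \<open>P \<noteq> 0\<close> P(1) by simp
    then show ?thesis using E0 EO(1) by (intro algebraic_int.intros[of E]) auto
  next
    case False
    then have "lead_coeff Od = 1" using EO(4) \<open>P \<noteq> 0\<close> P(1) by simp
    then show ?thesis using O0 EO(2) by (intro algebraic_int.intros[of Od]) auto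
  qed
qed

lemma alg_iff: "algebraic_integer (x::real) \<longleftrightarrow> algebraic_int x"
  unfolding algebraic_integer_def algebraic_int_altdef_ipoly by auto

lemma unit_sq:
  fixes x :: real
  assumes "x > 1" "algebraic_integer x" "algebraic_integer (inverse x)"
  shows "x * x \<notin> \<rat>"
proof
  assume q: "x * x \<in> \<rat>"
  have "x * x \<in> \<int>" using alg_sq[OF assms(2)[unfolded alg_iff] q] q rational_algebraic_int_is_int by blast
  moreover have "inverse x * inverse x \<in> \<int>"
  proof -
    have q2: "inverse x * inverse x \<in> \<rat>" using q by (metis Rats_inverse inverse_mult_distrib)
    show ?thesis using alg_sq[OF assms(3)[unfolded alg_iff] q2] q2 rational_algebraic_int_is_int by blast
  qed
  ultimately obtain m n where mn: "x * x = of_int m" "inverse x * inverse x = of_int n" by (auto elim!: Ints_cases)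
  have "x * x > 1" using assms(1) by (metis less_1_mult)
  then have "0 < inverse x * inverse x" "inverse x * inverse x < 1"
    using assms(1) less_imp_inverse_less[of 1 "x*x"] by (auto simp flip: inverse_mult_distrib)
  then show False using mn(2) by auto
qed


section \<open>Automorphism group\<close>

definition compL :: "real set \<Rightarrow> (real \<Rightarrow> real) \<Rightarrow> (real \<Rightarrow> real) \<Rightarrow> real \<Rightarrow> real" where
  "compL L \<sigma> \<tau> = (\<lambda>x. if x \<in> L then \<sigma> (\<tau> x) else 0)"

definition idL :: "real set \<Rightarrow> real \<Rightarrow> real" where
  "idL L = (\<lambda>x. if x \<in> L then x else 0)"

lemma aut_in: "\<sigma> \<in> field_auts L \<Longrightarrow> x \<in> L \<Longrightarrow> \<sigma> x \<in> L"
  unfolding field_auts_def using bij_betwE by blast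

lemma aut_inj: "\<sigma> \<in> field_auts L \<Longrightarrow> x \<in> L \<Longrightarrow> y \<in> L \<Longrightarrow> \<sigma> x = \<sigma> y \<Longrightarrow> x = y"
  unfolding field_auts_def bij_betw_def inj_on_def by blast

lemma idL_aut: "real_subfield L \<Longrightarrow> idL L \<in> field_auts L"
  unfolding field_auts_def idL_def
  by (auto simp: rsf_1 rsf_add rsf_mult bij_betw_def inj_on_def intro!: image_eqI)

lemma compL_aut:
  assumes L: "real_subfield L" and s: "\<sigma> \<in> field_auts L" and t: "\<tau> \<in> field_auts L"
  shows "compL L \<sigma> \<tau> \<in> field_auts L"
proof -
  have b1: "bij_betw \<sigma> L L" and b2: "bij_betw \<tau> L L" using s t by (auto simp: field_auts_def)
  have "bij_betw (\<sigma> \<circ> \<tau>) L L" using bij_betw_trans[OF b2 b1] .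
  then have b: "bij_betw (compL L \<sigma> \<tau>) L L"
    by (rule bij_betw_cong[THEN iffD1, rotated]) (simp add: compL_def)
  have e1: "\<sigma> \<in> real_embeddings L" "\<tau> \<in> real_embeddings L" using s t auts_emb by auto
  show ?thesis unfolding field_auts_def
    using b e1 rsf_1[OF L] aut_in[OF t] rsf_add[OF L] rsf_mult[OF L]
    by (auto simp: compL_def emb_1 emb_add emb_mult)
qed

lemma compL_inj:
  assumes s: "\<sigma> \<in> field_auts L" and t: "\<tau> \<in> field_auts L" and t': "\<tau>' \<in> field_auts L"
    and eq: "compL L \<sigma> \<tau> = compL L \<sigma> \<tau>'"
  shows "\<tau> = \<tau>'"
proof
  fix x show "\<tau> x = \<tau>' x"
  proof (cases "x \<in> L")
    case True
    then have "\<sigma> (\<tau> x) = \<sigma> (\<tau>' x)" using fun_cong[OF eq, of x] by (simp add: compL_def)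
    then show ?thesis using aut_inj[OF s aut_in[OF t True] aut_in[OF t' True]] by simp
  next
    case False then show ?thesis using t t' by (simp add: field_auts_def)
  qed
qed

definition trL :: "real set \<Rightarrow> real \<Rightarrow> real" where
  "trL L x = (\<Sum>\<tau>\<in>field_auts L. \<tau> x)"

lemma trL_fixed:
  assumes L: "real_subfield L" and fin: "finite (field_auts L)" and s: "\<sigma> \<in> field_auts L" and x: "x \<in> L"
  shows "\<sigma> (trL L x) = trL L x"
proof -
  let ?G = "field_auts L"
  have es: "\<sigma> \<in> real_embeddings L" using s auts_emb by auto
  have "\<sigma> (trL L x) = (\<Sum>\<tau>\<in>?G. \<sigma> (\<tau> x))"
    unfolding trL_def by (rule emb_sum[OF L es]) (rule aut_in[OF _ x])
  also have "\<dots> = (\<Sum>\<tau>\<in>?G. compL L \<sigma> \<tau> x)" using x by (simp add: compL_def)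
  also have "\<dots> = (\<Sum>\<tau>\<in>compL L \<sigma> ` ?G. \<tau> x)"
  proof -
    have "inj_on (compL L \<sigma>) ?G" using compL_inj[OF s] by (meson inj_onI)
    then show ?thesis by (simp add: sum.reindex)
  qed
  also have "compL L \<sigma> ` ?G = ?G"
  proof -
    have inj: "inj_on (compL L \<sigma>) ?G" using compL_inj[OF s] by (meson inj_onI)
    have sub: "compL L \<sigma> ` ?G \<subseteq> ?G" using compL_aut[OF L s] by auto
    have "card (compL L \<sigma> ` ?G) = card ?G" using card_image[OF inj] .
    then show ?thesis using card_subset_eq[OF fin sub] by simp
  qed
  finally show ?thesis unfolding trL_def .
qed

lemma trL_in: "real_subfield L \<Longrightarrow> x \<in> L \<Longrightarrow> trL L x \<in> L"
  unfolding trL_def by (rule rsf_sum) (auto intro: aut_in)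

lemma trL_rat:
  assumes L: "real_subfield L" and G: "galois_over_Q L" and fin: "finite (field_auts L)" and x: "x \<in> L"
  shows "trL L x \<in> \<rat>"
proof -
  have "trL L x \<in> {x \<in> L. \<forall>\<sigma>\<in>field_auts L. \<sigma> x = x}"
    using trL_in[OF L x] trL_fixed[OF L fin _ x] by auto
  then show ?thesis using G unfolding galois_over_Q_def by metis
qed


lemma sign_comb:
  fixes a1 a2 a3 b1 b2 b3 c1 c2 c3 :: real
  assumes "a1 = 1 \<or> a1 = -1" "a2 = 1 \<or> a2 = -1" "a3 = 1 \<or> a3 = -1"
    "b1 = 1 \<or> b1 = -1" "b2 = 1 \<or> b2 = -1" "b3 = 1 \<or> b3 = -1"
    "c1 = 1 \<or> c1 = -1" "c2 = 1 \<or> c2 = -1" "c3 = 1 \<or> c3 = -1"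
    "1 + a1 + a2 + a3 = 0" "1 + b1 + b2 + b3 = 0" "1 + c1 + c2 + c3 = 0"
    "1 + a1*b1 + a2*b2 + a3*b3 = 0" "1 + a1*c1 + a2*c2 + a3*c3 = 0" "1 + b1*c1 + b2*c2 + b3*c3 = 0"
  shows "{(a1,b1,c1),(a2,b2,c2),(a3,b3,c3)} = {(1,-1,-1),(-1,1,-1),(-1,-1,1)}"
proof -
  have a: "(a1,a2,a3) = (1,-1,-1) \<or> (a1,a2,a3) = (-1,1,-1) \<or> (a1,a2,a3) = (-1,-1,1)"
    using assms(1-3,10) by auto
  have b: "(b1,b2,b3) = (1,-1,-1) \<or> (b1,b2,b3) = (-1,1,-1) \<or> (b1,b2,b3) = (-1,-1,1)"
    using assms(4-6,11) by auto
  have c: "(c1,c2,c3) = (1,-1,-1) \<or> (c1,c2,c3) = (-1,1,-1) \<or> (c1,c2,c3) = (-1,-1,1)"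
    using assms(7-9,12) by auto
  from a b c assms(13-15) show ?thesis
    by (elim disjE) (simp_all, auto)
qed


lemma some_pair:
  assumes "x \<noteq> y" and sym: "\<bar>B y x\<bar> = \<bar>B x y\<bar>"
  shows "\<bar>B (SOME v. v \<in> {x,y}) (SOME w. w \<in> {x,y} \<and> w \<noteq> (SOME v. v \<in> {x,y}))\<bar> = \<bar>B x y\<bar>"
proof -
  define v where "v = (SOME v. v \<in> {x,y})"
  have vin: "v = x \<or> v = y" using someI[of "\<lambda>v. v \<in> {x,y}" x] unfolding v_def by simp
  show ?thesis
  proof (cases "v = x")
    case True
    have e1: "(SOME v. v \<in> {x,y}) = x" using True v_def by simp
    have e2: "(SOME w. w \<in> {x,y} \<and> w \<noteq> x) = y" using assms(1) by (intro some_equality) auto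
    show ?thesis by (simp only: e1 e2)
  next
    case False
    then have e1: "(SOME v. v \<in> {x,y}) = y" using vin v_def by simp
    have e2: "(SOME w. w \<in> {x,y} \<and> w \<noteq> y) = x" using assms(1) by (intro some_equality) auto
    show ?thesis by (simp only: e1 e2 sym)
  qed
qed

lemma two_subsets4:
  assumes "distinct [a,b,c,d]"
  shows "{I. I \<subseteq> {a,b,c,d} \<and> card I = 2} = {{a,b},{a,c},{a,d},{b,c},{b,d},{c,d}}"
proof (intro equalityI subsetI)
  fix I assume "I \<in> {I. I \<subseteq> {a,b,c,d} \<and> card I = 2}"
  then obtain x y where "I = {x,y}" "x \<noteq> y" "x \<in> {a,b,c,d}" "y \<in> {a,b,c,d}"
    by (auto simp: card_2_iff)
  then show "I \<in> {{a,b},{a,c},{a,d},{b,c},{b,d},{c,d}}" by (auto simp: doubleton_eq_iff)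
next
  fix I assume "I \<in> {{a,b},{a,c},{a,d},{b,c},{b,d},{c,d}}"
  then show "I \<in> {I. I \<subseteq> {a,b,c,d} \<and> card I = 2}" using assms by auto
qed

lemma norm1_four:
  assumes d: "distinct [a,b,c,d]" and sym: "\<And>x y. \<bar>B y x\<bar> = \<bar>B x y\<bar>"
  shows "norm1 {a,b,c,d} B = \<bar>B a b\<bar> + \<bar>B a c\<bar> + \<bar>B a d\<bar> + \<bar>B b c\<bar> + \<bar>B b d\<bar> + \<bar>B c d\<bar>"
proof -
  define f where "f = (\<lambda>I. \<bar>B (SOME v. v \<in> I) (SOME w. w \<in> I \<and> w \<noteq> (SOME v. v \<in> I))\<bar>)"
  have sp: "f {x,y} = \<bar>B x y\<bar>" if "x \<noteq> y" for x y
    unfolding f_def by (rule some_pair[of x y B, OF that sym[of y x]])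
  have ne: "{a,b} \<noteq> {a,c}" "{a,b} \<noteq> {a,d}" "{a,b} \<noteq> {b,c}" "{a,b} \<noteq> {b,d}" "{a,b} \<noteq> {c,d}"
    "{a,c} \<noteq> {a,d}" "{a,c} \<noteq> {b,c}" "{a,c} \<noteq> {b,d}" "{a,c} \<noteq> {c,d}"
    "{a,d} \<noteq> {b,c}" "{a,d} \<noteq> {b,d}" "{a,d} \<noteq> {c,d}"
    "{b,c} \<noteq> {b,d}" "{b,c} \<noteq> {c,d}" "{b,d} \<noteq> {c,d}"
    using d by (auto simp: doubleton_eq_iff)
  have "norm1 {a,b,c,d} B = sum f {{a,b},{a,c},{a,d},{b,c},{b,d},{c,d}}"
    unfolding norm1_def two_subsets4[OF d] f_def ..
  also have "\<dots> = f {a,b} + f {a,c} + f {a,d} + f {b,c} + f {b,d} + f {c,d}"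
    using ne by (simp add: add.assoc)
  also have "\<dots> = \<bar>B a b\<bar> + \<bar>B a c\<bar> + \<bar>B a d\<bar> + \<bar>B b c\<bar> + \<bar>B b d\<bar> + \<bar>B c d\<bar>"
    using d by (simp add: sp)
  finally show ?thesis .
qed


lemma same_field:
  assumes K1: "K1 = {p + q * d1 | p q. p \<in> \<rat> \<and> q \<in> \<rat>}" and K2: "K2 = {p + q * d2 | p q. p \<in> \<rat> \<and> q \<in> \<rat>}"
    and d1: "d1 * d1 \<in> \<rat>" "d1 \<noteq> 0" and d2: "d2 \<noteq> 0" and pr: "d1 * d2 \<in> \<rat>"
  shows "K1 = K2"
proof -
  define r where "r = d1 * d2"
  have r0: "r \<noteq> 0" using d1 d2 by (simp add: r_def)
  have e2: "d2 = (r / (d1 * d1)) * d1" using d1 by (simp add: r_def field_simps)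
  have e1: "d1 = ((d1 * d1) / r) * d2" using d1 d2 by (simp add: r_def field_simps)
  have rq: "r \<in> \<rat>" using pr r_def by simp
  have c1: "r / (d1 * d1) \<in> \<rat>" "(d1 * d1) / r \<in> \<rat>" using rq d1 by auto
  show ?thesis
  proof (intro equalityI subsetI)
    fix x assume "x \<in> K1"
    then obtain p q where pq: "p \<in> \<rat>" "q \<in> \<rat>" "x = p + q * d1" using K1 by blast
    have "x = p + (q * ((d1 * d1) / r)) * d2" using pq(3) e1 by (metis mult.assoc)
    moreover have "q * ((d1 * d1) / r) \<in> \<rat>" by (rule Rats_mult[OF pq(2) c1(2)])
    ultimately show "x \<in> K2" unfolding K2 mem_Collect_eq using pq(1) by blast
  next
    fix x assume "x \<in> K2"
    then obtain p q where pq: "p \<in> \<rat>" "q \<in> \<rat>" "x = p + q * d2" using K2 by blast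
    have "x = p + (q * (r / (d1 * d1))) * d1" using pq(3) e2 by (metis mult.assoc)
    moreover have "q * (r / (d1 * d1)) \<in> \<rat>" by (rule Rats_mult[OF pq(2) c1(1)])
    ultimately show "x \<in> K1" unfolding K1 mem_Collect_eq using pq(1) by blast
  qed
qed


lemma rsf_powi: "real_subfield K \<Longrightarrow> x \<in> K \<Longrightarrow> x powi m \<in> K"
  by (simp add: power_int_def rsf_power rsf_inverse)

lemma powi_self_eq:
  fixes u :: real
  assumes "u > 1" "k \<ge> 0" "u powi k = u"
  shows "k = 1"
proof -
  have "u ^ nat k = u ^ 1" using assms by (simp add: power_int_def)
  then have "nat k = 1" using assms(1) power_inject_exp by blast
  then show ?thesis using assms(2) by simp
qed

lemma ln_powi: "(x::real) > 0 \<Longrightarrow> ln (x powi m) = of_int m * ln x"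
proof (cases "m \<ge> 0")
  case True
  assume "x > 0"
  then show ?thesis using True by (simp add: power_int_def ln_realpow)
next
  case False
  assume "x > 0"
  then show ?thesis using False by (simp add: power_int_def ln_realpow ln_inverse)
qed

lemma unit_conj:
  assumes L: "real_subfield L" and g: "g \<in> real_embeddings L" and KL: "K \<subseteq> L"
    and K: "K = {p + q * \<delta> | p q. p \<in> \<rat> \<and> q \<in> \<rat>}" and dn: "\<delta> \<notin> \<rat>" and dq: "\<delta> * \<delta> \<in> \<rat>"
    and gd: "g \<delta> = - \<delta>" and fu: "fundamental_unit K u"
  shows "\<exists>p q. p \<in> \<rat> \<and> q \<in> \<rat> \<and> u = p + q * \<delta> \<and> \<bar>p - q * \<delta>\<bar> = inverse u"
proof -
  have uK: "u \<in> K" and u1: "u > 1" and alg: "algebraic_integer u" "algebraic_integer (inverse u)"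
    and fp: "\<forall>v\<in>int_units K. \<exists>s::real. \<exists>m::int. (s = 1 \<or> s = -1) \<and> v = s * u powi m"
    using fu by (auto simp: fundamental_unit_def int_units_def)
  obtain p q where pq: "p \<in> \<rat>" "q \<in> \<rat>" "u = p + q * \<delta>" using uK K by blast
  have d0: "\<delta> \<noteq> 0" using dn by auto
  have dK: "\<delta> \<in> K" unfolding K mem_Collect_eq by (intro exI[of _ 0] exI[of _ 1]) simp
  have dL: "\<delta> \<in> L" using dK KL by auto
  have pL: "p \<in> L" and qL: "q \<in> L" using pq rsf_Rats[OF L] by auto
  have uL: "u \<in> L" using uK KL by auto
  define u' where "u' = p - q * \<delta>"
  have gu: "g u = u'"
    unfolding pq(3) u'_def
    using emb_add[OF g pL rsf_mult[OF L qL dL]] emb_mult[OF g qL dL] emb_Rats[OF L g] pq gd by simp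
  have gu': "g u' = u"
    unfolding pq(3) u'_def
    using emb_diff[OF L g pL rsf_mult[OF L qL dL]] emb_mult[OF g qL dL] emb_Rats[OF L g] pq gd by simp
  have u'K: "u' \<in> K" unfolding K mem_Collect_eq u'_def using pq
    by (intro exI[of _ p] exI[of _ "-q"]) simp
  have u'0: "u' \<noteq> 0"
  proof
    assume "u' = 0"
    then have pe: "p = q * \<delta>" by (simp add: u'_def)
    show False
    proof (cases "q = 0")
      case True then show False using pe pq u1 by simp
    next
      case False
      then have "\<delta> = p / q" using pe by simp
      then show False using dn pq by simp
    qed
  qed
  have "algebraic_integer u'" using emb_alg[OF L g uL alg(1)] gu by simp
  moreover have "algebraic_integer (inverse u')"
    using emb_alg[OF L g rsf_inverse[OF L uL] alg(2)] emb_inverse[OF L g uL] gu by simp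
  ultimately have "u' \<in> int_units K" using u'K u'0 by (simp add: int_units_def)
  then obtain s :: real and m :: int where sm: "s = 1 \<or> s = -1" "u' = s * u powi m" using fp by blast
  have sL: "s \<in> L" using sm(1) rsf_1[OF L] rsf_uminus[OF L] by auto
  have sQ: "s \<in> \<rat>" using sm(1) by auto
  have "u = g u'" using gu' by simp
  also have "\<dots> = s * (g u) powi m"
    unfolding sm(2) using emb_mult[OF g sL rsf_powi[OF L uL]] emb_powi[OF L g uL] emb_Rats[OF L g sQ]
    by simp
  also have "\<dots> = s * (s * u powi m) powi m" using gu sm(2) by simp
  also have "\<dots> = (s * s powi m) * u powi (m * m)" by (simp add: power_int_mult_distrib power_int_mult)
  finally have ueq: "u = (s * s powi m) * u powi (m * m)" .
  have s1: "\<bar>s * s powi m\<bar> = 1" using sm(1) by (auto simp: power_int_abs abs_mult)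
  have "u powi (m * m) > 0" using u1 by simp
  then have "\<bar>u\<bar> = u powi (m * m)" using ueq s1 by (metis abs_mult abs_of_pos mult_1)
  then have "u powi (m * m) = u" using u1 by simp
  then have "m * m = 1" using powi_self_eq[OF u1] by simp
  then have m1: "m = 1 \<or> m = -1" by (simp add: zmult_eq_1_iff)
  show ?thesis
  proof (cases "m = 1")
    case True
    then have u's: "u' = s * u" using sm(2) by simp
    have "u * u \<in> \<rat>"
    proof (cases "s = 1")
      case True
      then have "q * \<delta> = 0" using u's pq(3) by (simp add: u'_def)
      then have "q = 0" using d0 by simp
      then show ?thesis using pq by simp
    next
      case False
      then have "s = -1" using sm(1) by simp
      then have "p = 0" using u's pq(3) by (simp add: u'_def)
      then have "u * u = (q * q) * (\<delta> * \<delta>)" using pq(3) by (simp add: algebra_simps)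
      then show ?thesis using pq dq by simp
    qed
    then show ?thesis using unit_sq[OF u1 alg] by simp
  next
    case False
    then have "m = -1" using m1 by simp
    then have "u' = s * inverse u" using sm(2) by (simp add: power_int_def)
    then have "\<bar>u'\<bar> = inverse u" using sm(1) u1 by auto
    then show ?thesis using pq unfolding u'_def by blast
  qed
qed


lemma zero_factor: "(\<delta>::real) \<notin> \<rat> \<Longrightarrow> \<delta> * c \<in> \<rat> \<Longrightarrow> c \<in> \<rat> \<Longrightarrow> c = 0"
proof (rule ccontr)
  assume a: "\<delta> \<notin> \<rat>" "\<delta> * c \<in> \<rat>" "c \<in> \<rat>" "c \<noteq> 0"
  then have "\<delta> = (\<delta> * c) / c" by simp
  then have "\<delta> \<in> \<rat>" using a(2,3) by (metis Rats_divide)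
  then show False using a(1) by simp
qed

lemma tr_zero:
  fixes y c1 c2 c3 :: real
  assumes "y \<notin> \<rat>" "y + c1 * y + c2 * y + c3 * y \<in> \<rat>" "c1 \<in> \<rat>" "c2 \<in> \<rat>" "c3 \<in> \<rat>"
  shows "1 + c1 + c2 + c3 = 0"
proof (rule zero_factor[OF assms(1)])
  show "y * (1 + c1 + c2 + c3) \<in> \<rat>" using assms(2) by (simp add: algebra_simps)
  show "1 + c1 + c2 + c3 \<in> \<rat>" using assms(3-5) by simp
qed

lemma trL4:
  assumes "field_auts L = {h0,h1,h2,h3}" "distinct [h0,h1,h2,h3]"
  shows "trL L x = h0 x + h1 x + h2 x + h3 x"
  using assms by (simp add: trL_def add.assoc)

lemma sign_of:
  assumes "\<tau> \<delta> = \<delta> \<or> \<tau> \<delta> = - \<delta>" "(\<delta>::real) \<noteq> 0"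
  shows "(\<tau> \<delta> / \<delta> = 1 \<or> \<tau> \<delta> / \<delta> = -1) \<and> \<tau> \<delta> = (\<tau> \<delta> / \<delta>) * \<delta>"
  using assms by auto

lemma emb_nonzero:
  assumes L: "real_subfield L" and t: "\<tau> \<in> real_embeddings L" and x: "x \<in> L" "x \<noteq> 0"
  shows "\<tau> x \<noteq> 0"
proof
  assume "\<tau> x = 0"
  then have "\<tau> (x * inverse x) = 0" using emb_mult[OF t x(1) rsf_inverse[OF L x(1)]] by simp
  then show False using x emb_1[OF t] by simp
qed

lemma agree:
  assumes L: "real_subfield L" and p: "\<phi> \<in> real_embeddings L" and s: "\<psi> \<in> real_embeddings L"
    and x: "x \<in> L" and d: "d1 \<in> L" "d2 \<in> L" "d3 \<in> L"
    and r: "r0 \<in> \<rat>" "r1 \<in> \<rat>" "r2 \<in> \<rat>" "r3 \<in> \<rat>"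
    and dec: "4 * x = r0 + r1 / d1 + r2 / d2 + r3 / d3"
    and e: "\<phi> d1 = \<psi> d1" "\<phi> d2 = \<psi> d2" "\<phi> d3 = \<psi> d3"
  shows "\<phi> x = \<psi> x"
proof -
  have rL: "r0 \<in> L" "r1 \<in> L" "r2 \<in> L" "r3 \<in> L" using r rsf_Rats[OF L] by auto
  have fL: "4 \<in> L" using rsf_Rats[OF L] by auto
  have ev: "\<chi> (4 * x) = r0 + r1 / \<chi> d1 + r2 / \<chi> d2 + r3 / \<chi> d3" if c: "\<chi> \<in> real_embeddings L" for \<chi>
  proof -
    have q1: "r1 / d1 \<in> L" "r2 / d2 \<in> L" "r3 / d3 \<in> L" using rsf_divide[OF L] rL d by auto
    have "\<chi> (r0 + r1 / d1 + r2 / d2 + r3 / d3) = \<chi> r0 + \<chi> (r1 / d1) + \<chi> (r2 / d2) + \<chi> (r3 / d3)"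
      using q1 rL by (simp add: emb_add[OF c] rsf_add[OF L])
    also have "\<dots> = r0 + r1 / \<chi> d1 + r2 / \<chi> d2 + r3 / \<chi> d3"
      using emb_divide[OF L c] emb_Rats[OF L c] rL d r by simp
    finally show ?thesis using dec by simp
  qed
  have "\<phi> (4 * x) = 4 * \<phi> x" using emb_mult[OF p fL x] emb_Rats[OF L p, of 4] by simp
  moreover have "\<psi> (4 * x) = 4 * \<psi> x" using emb_mult[OF s fL x] emb_Rats[OF L s, of 4] by simp
  ultimately show ?thesis using ev[OF p] ev[OF s] e by simp
qed

lemma LOG_unit:
  assumes L: "real_subfield L" and t: "\<tau> \<in> real_embeddings L" and dL: "\<delta> \<in> L"
    and pq: "p \<in> \<rat>" "q \<in> \<rat>" "u = p + q * \<delta>" "\<bar>p - q * \<delta>\<bar> = inverse u" and u1: "u > 1"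
  shows "\<tau> \<delta> = \<delta> \<Longrightarrow> LOG L u \<tau> = ln u" and "\<tau> \<delta> = - \<delta> \<Longrightarrow> LOG L u \<tau> = - ln u"
proof -
  have pL: "p \<in> L" and qL: "q \<in> L" using pq rsf_Rats[OF L] by auto
  have tu: "\<tau> u = p + q * \<tau> \<delta>"
    unfolding pq(3) using emb_add[OF t pL rsf_mult[OF L qL dL]] emb_mult[OF t qL dL] emb_Rats[OF L t] pq by simp
  show "\<tau> \<delta> = \<delta> \<Longrightarrow> LOG L u \<tau> = ln u" using tu t pq(3) u1 by (simp add: LOG_def)
  show "\<tau> \<delta> = - \<delta> \<Longrightarrow> LOG L u \<tau> = - ln u" using tu t pq(4) u1 by (simp add: LOG_def ln_inverse)
qed


lemma structure_lemma:
  fixes L K1 K2 K3 :: "real set" and u1 u2 u3 :: real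
  assumes L: "real_subfield L"
    and gal: "galois_over_Q L"
    and iso: "aut_group L \<cong> DirProd (integer_mod_group 2) (integer_mod_group 2)"
    and Q1: "quadratic_subfield L K1" and Q2: "quadratic_subfield L K2" and Q3: "quadratic_subfield L K3"
    and ne12: "K1 \<noteq> K2" and ne13: "K1 \<noteq> K3" and ne23: "K2 \<noteq> K3"
    and fu1: "fundamental_unit K1 u1" and fu2: "fundamental_unit K2 u2" and fu3: "fundamental_unit K3 u3"
  shows "\<exists>t0 t1 t2 t3. real_embeddings L = {t0,t1,t2,t3} \<and> distinct [t0,t1,t2,t3] \<and>
      LOG L u1 t0 = ln u1 \<and> LOG L u2 t0 = ln u2 \<and> LOG L u3 t0 = ln u3 \<and>
      LOG L u1 t1 = ln u1 \<and> LOG L u2 t1 = - ln u2 \<and> LOG L u3 t1 = - ln u3 \<and>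
      LOG L u1 t2 = - ln u1 \<and> LOG L u2 t2 = ln u2 \<and> LOG L u3 t2 = - ln u3 \<and>
      LOG L u1 t3 = - ln u1 \<and> LOG L u2 t3 = - ln u2 \<and> LOG L u3 t3 = ln u3"
proof -
  define G where "G = field_auts L"
  define A where "A = real_embeddings L"
  have GA: "G \<subseteq> A" unfolding G_def A_def by (rule auts_emb)
  have cG: "carrier (aut_group L) = G" by (simp add: aut_group_def G_def)
  have fin: "finite G" using iso_finite[OF iso] cG by (simp add: carrier_integer_mod_group)
  have card4: "card G = 4" using iso_same_card[OF iso] cG
    by (simp add: carrier_integer_mod_group card_cartesian_product)
  have KL1: "K1 \<subseteq> L" and KL2: "K2 \<subseteq> L" and KL3: "K3 \<subseteq> L"
    using Q1 Q2 Q3 by (auto simp: quadratic_subfield_def)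
  obtain d1 where D1: "d1 \<in> K1" "d1 \<notin> \<rat>" "d1 * d1 \<in> \<rat>" "K1 = {p + q * d1 | p q. p \<in> \<rat> \<and> q \<in> \<rat>}"
    using quad_delta[OF L Q1] by blast
  obtain d2 where D2: "d2 \<in> K2" "d2 \<notin> \<rat>" "d2 * d2 \<in> \<rat>" "K2 = {p + q * d2 | p q. p \<in> \<rat> \<and> q \<in> \<rat>}"
    using quad_delta[OF L Q2] by blast
  obtain d3 where D3: "d3 \<in> K3" "d3 \<notin> \<rat>" "d3 * d3 \<in> \<rat>" "K3 = {p + q * d3 | p q. p \<in> \<rat> \<and> q \<in> \<rat>}"
    using quad_delta[OF L Q3] by blast
  have dL: "d1 \<in> L" "d2 \<in> L" "d3 \<in> L" using D1(1) D2(1) D3(1) KL1 KL2 KL3 by auto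
  have dz: "d1 \<noteq> 0" "d2 \<noteq> 0" "d3 \<noteq> 0" using D1 D2 D3 by auto
  have p12: "d1 * d2 \<notin> \<rat>" using same_field[OF D1(4) D2(4) D1(3) dz(1) dz(2)] ne12 by blast
  have p13: "d1 * d3 \<notin> \<rat>" using same_field[OF D1(4) D3(4) D1(3) dz(1) dz(3)] ne13 by blast
  have p23: "d2 * d3 \<notin> \<rat>" using same_field[OF D2(4) D3(4) D2(3) dz(2) dz(3)] ne23 by blast
  have idG: "idL L \<in> G" unfolding G_def by (rule idL_aut[OF L])
  have "card (G - {idL L}) = 3" using card4 idG fin by simp
  then obtain g1 g2 g3 where g: "G - {idL L} = {g1,g2,g3}" "g1 \<noteq> g2" "g2 \<noteq> g3" "g1 \<noteq> g3"
    by (auto simp: card_3_iff)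
  have Gdef: "G = {idL L, g1, g2, g3}" using g(1) idG by blast
  have gdist: "distinct [idL L, g1, g2, g3]" using g by auto
  have gA: "g1 \<in> A" "g2 \<in> A" "g3 \<in> A" using Gdef GA by auto
  have idA: "idL L \<in> A" using idG GA by auto
  have trG: "trL L x = idL L x + g1 x + g2 x + g3 x" for x
    by (rule trL4[OF Gdef[unfolded G_def] gdist])
  have trQ: "x \<in> L \<Longrightarrow> trL L x \<in> \<rat>" for x using trL_rat[OF L gal fin[unfolded G_def]] by blast
  define e1 where "e1 = (\<lambda>t::real\<Rightarrow>real. t d1 / d1)"
  define e2 where "e2 = (\<lambda>t::real\<Rightarrow>real. t d2 / d2)"
  define e3 where "e3 = (\<lambda>t::real\<Rightarrow>real. t d3 / d3)"
  have sg: "(e1 t = 1 \<or> e1 t = -1) \<and> t d1 = e1 t * d1"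
           "(e2 t = 1 \<or> e2 t = -1) \<and> t d2 = e2 t * d2"
           "(e3 t = 1 \<or> e3 t = -1) \<and> t d3 = e3 t * d3" if "t \<in> A" for t
    using sign_of[of t d1, OF emb_delta[OF L that[unfolded A_def] dL(1) D1(3)] dz(1)]
      sign_of[of t d2, OF emb_delta[OF L that[unfolded A_def] dL(2) D2(3)] dz(2)]
      sign_of[of t d3, OF emb_delta[OF L that[unfolded A_def] dL(3) D3(3)] dz(3)]
    unfolding e1_def e2_def e3_def by auto
  have sgQ: "e1 t \<in> \<rat>" "e2 t \<in> \<rat>" "e3 t \<in> \<rat>" if "t \<in> A" for t
    using sg[OF that] by auto
  have idv: "idL L y = y" if "y \<in> L" for y using that by (simp add: idL_def)
  have prod2: "t (y * z) = (e * f) * (y * z)" if "t \<in> A" "y \<in> L" "z \<in> L" "t y = e * y" "t z = f * z" for t y z e f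
    using emb_mult[OF that(1)[unfolded A_def] that(2,3)] that(4,5) by simp
  have s1: "1 + e1 g1 + e1 g2 + e1 g3 = 0"
    apply (rule tr_zero[OF D1(2)])
    subgoal using trQ[OF dL(1)] trG[of d1] idv[OF dL(1)] sg(1)[OF gA(1), THEN conjunct2] sg(1)[OF gA(2), THEN conjunct2] sg(1)[OF gA(3), THEN conjunct2] by simp
    using sgQ gA by auto
  have s2: "1 + e2 g1 + e2 g2 + e2 g3 = 0"
    apply (rule tr_zero[OF D2(2)])
    subgoal using trQ[OF dL(2)] trG[of d2] idv[OF dL(2)] sg(2)[OF gA(1), THEN conjunct2] sg(2)[OF gA(2), THEN conjunct2] sg(2)[OF gA(3), THEN conjunct2] by simp
    using sgQ gA by auto
  have s3: "1 + e3 g1 + e3 g2 + e3 g3 = 0"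
    apply (rule tr_zero[OF D3(2)])
    subgoal using trQ[OF dL(3)] trG[of d3] idv[OF dL(3)] sg(3)[OF gA(1), THEN conjunct2] sg(3)[OF gA(2), THEN conjunct2] sg(3)[OF gA(3), THEN conjunct2] by simp
    using sgQ gA by auto
  have L12: "d1 * d2 \<in> L" "d1 * d3 \<in> L" "d2 * d3 \<in> L" using dL rsf_mult[OF L] by auto
  have s12: "1 + e1 g1 * e2 g1 + e1 g2 * e2 g2 + e1 g3 * e2 g3 = 0"
    apply (rule tr_zero[OF p12])
    subgoal using trQ[OF L12(1)] trG[of "d1 * d2"] idv[OF L12(1)] prod2[OF gA(1) dL(1) dL(2) sg(1)[OF gA(1), THEN conjunct2] sg(2)[OF gA(1), THEN conjunct2]] prod2[OF gA(2) dL(1) dL(2) sg(1)[OF gA(2), THEN conjunct2] sg(2)[OF gA(2), THEN conjunct2]] prod2[OF gA(3) dL(1) dL(2) sg(1)[OF gA(3), THEN conjunct2] sg(2)[OF gA(3), THEN conjunct2]] by simp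
    using sgQ gA by auto
  have s13: "1 + e1 g1 * e3 g1 + e1 g2 * e3 g2 + e1 g3 * e3 g3 = 0"
    apply (rule tr_zero[OF p13])
    subgoal using trQ[OF L12(2)] trG[of "d1 * d3"] idv[OF L12(2)] prod2[OF gA(1) dL(1) dL(3) sg(1)[OF gA(1), THEN conjunct2] sg(3)[OF gA(1), THEN conjunct2]] prod2[OF gA(2) dL(1) dL(3) sg(1)[OF gA(2), THEN conjunct2] sg(3)[OF gA(2), THEN conjunct2]] prod2[OF gA(3) dL(1) dL(3) sg(1)[OF gA(3), THEN conjunct2] sg(3)[OF gA(3), THEN conjunct2]] by simp
    using sgQ gA by auto
  have s23: "1 + e2 g1 * e3 g1 + e2 g2 * e3 g2 + e2 g3 * e3 g3 = 0"
    apply (rule tr_zero[OF p23])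
    subgoal using trQ[OF L12(3)] trG[of "d2 * d3"] idv[OF L12(3)] prod2[OF gA(1) dL(2) dL(3) sg(2)[OF gA(1), THEN conjunct2] sg(3)[OF gA(1), THEN conjunct2]] prod2[OF gA(2) dL(2) dL(3) sg(2)[OF gA(2), THEN conjunct2] sg(3)[OF gA(2), THEN conjunct2]] prod2[OF gA(3) dL(2) dL(3) sg(2)[OF gA(3), THEN conjunct2] sg(3)[OF gA(3), THEN conjunct2]] by simp
    using sgQ gA by auto
  have trip: "{(e1 g1, e2 g1, e3 g1), (e1 g2, e2 g2, e3 g2), (e1 g3, e2 g3, e3 g3)} = {(1,-1,-1),(-1,1,-1),(-1,-1,1)}"
    by (rule sign_comb) (use sg[OF gA(1)] sg[OF gA(2)] sg[OF gA(3)] s1 s2 s3 s12 s13 s23 in auto)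
  have "(1,-1,-1) \<in> {(e1 g1, e2 g1, e3 g1), (e1 g2, e2 g2, e3 g2), (e1 g3, e2 g3, e3 g3)}"
    unfolding trip by simp
  note mem = this
  obtain t1 where t1: "t1 \<in> {g1,g2,g3}" "e1 t1 = 1" "e2 t1 = -1" "e3 t1 = -1"
  proof -
    have "(e1 g1, e2 g1, e3 g1) = (1,-1,-1) \<or> (e1 g2, e2 g2, e3 g2) = (1,-1,-1) \<or> (e1 g3, e2 g3, e3 g3) = (1,-1,-1)"
      using mem by force
    then show ?thesis by (elim disjE) (auto intro: that)
  qed
  have "(-1,1,-1) \<in> {(e1 g1, e2 g1, e3 g1), (e1 g2, e2 g2, e3 g2), (e1 g3, e2 g3, e3 g3)}"
    unfolding trip by simp
  note mem = this
  obtain t2 where t2: "t2 \<in> {g1,g2,g3}" "e1 t2 = -1" "e2 t2 = 1" "e3 t2 = -1"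
  proof -
    have "(e1 g1, e2 g1, e3 g1) = (-1,1,-1) \<or> (e1 g2, e2 g2, e3 g2) = (-1,1,-1) \<or> (e1 g3, e2 g3, e3 g3) = (-1,1,-1)"
      using mem by force
    then show ?thesis by (elim disjE) (auto intro: that)
  qed
  have "(-1,-1,1) \<in> {(e1 g1, e2 g1, e3 g1), (e1 g2, e2 g2, e3 g2), (e1 g3, e2 g3, e3 g3)}"
    unfolding trip by simp
  note mem = this
  obtain t3 where t3: "t3 \<in> {g1,g2,g3}" "e1 t3 = -1" "e2 t3 = -1" "e3 t3 = 1"
  proof -
    have "(e1 g1, e2 g1, e3 g1) = (-1,-1,1) \<or> (e1 g2, e2 g2, e3 g2) = (-1,-1,1) \<or> (e1 g3, e2 g3, e3 g3) = (-1,-1,1)"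
      using mem by force
    then show ?thesis by (elim disjE) (auto intro: that)
  qed
  have t0: "e1 (idL L) = 1" "e2 (idL L) = 1" "e3 (idL L) = 1"
    using dL dz by (simp_all add: e1_def e2_def e3_def idL_def)
  have tdist: "distinct [idL L, t1, t2, t3]"
    using t0 t1 t2 t3 by auto
  have tA: "t1 \<in> A" "t2 \<in> A" "t3 \<in> A" using t1 t2 t3 gA by auto
  have G2: "G = {idL L, t1, t2, t3}"
  proof -
    have sub: "{idL L, t1, t2, t3} \<subseteq> G" using Gdef t1 t2 t3 by auto
    have "card {idL L, t1, t2, t3} = 4" using tdist by simp
    then show ?thesis using card_subset_eq[OF fin sub] card4 by simp
  qed
  have trG2: "trL L x = idL L x + t1 x + t2 x + t3 x" for x
    by (rule trL4[OF G2[unfolded G_def] tdist])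
  have t1d: "t1 d1 = d1" "t1 d2 = - d2" "t1 d3 = - d3"
    using sg[OF tA(1)] t1 by auto
  have t2d: "t2 d1 = - d1" "t2 d2 = d2" "t2 d3 = - d3"
    using sg[OF tA(2)] t2 by auto
  have t3d: "t3 d1 = - d1" "t3 d2 = - d2" "t3 d3 = d3"
    using sg[OF tA(3)] t3 by auto
  have emA: "t \<in> A \<Longrightarrow> t \<in> real_embeddings L" for t by (simp add: A_def)
  define d123 where "d123 = d1 * d2 * d3"
  have d123L: "d123 \<in> L" unfolding d123_def using dL rsf_mult[OF L] by auto
  have d123z: "d123 \<noteq> 0" unfolding d123_def using dz by simp
  have pr3: "t d123 = (e1 t * e2 t * e3 t) * d123" if "t \<in> A" for t
  proof -
    have "t (d1 * d2) = (e1 t * e2 t) * (d1 * d2)"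
      by (rule prod2[OF that dL(1) dL(2)]) (use sg[OF that] in auto)
    then show ?thesis unfolding d123_def
      using prod2[OF that L12(1) dL(3), of "e1 t * e2 t" "e3 t"] sg[OF that] by auto
  qed
  have d123Q: "d123 \<in> \<rat>"
  proof -
    have "trL L d123 = 4 * d123"
      using trG2[of d123] idv[OF d123L] pr3[OF tA(1)] pr3[OF tA(2)] pr3[OF tA(3)] t1 t2 t3 by simp
    then have "d123 = trL L d123 / 4" by simp
    then show ?thesis using trQ[OF d123L] by (metis Rats_divide Rats_number_of)
  qed
  have dec: "4 * x = trL L x + trL L (x * d1) / d1 + trL L (x * d2) / d2 + trL L (x * d3) / d3" if x: "x \<in> L" for x
  proof -
    have m: "t (x * d) = t x * t d" if "t \<in> A" "d \<in> L" for t d using emb_mult[OF emA[OF that(1)] x that(2)] .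
    have xd: "x * d1 \<in> L" "x * d2 \<in> L" "x * d3 \<in> L" using x dL rsf_mult[OF L] by auto
    have r1: "trL L (x * d1) = (x + t1 x - t2 x - t3 x) * d1"
      using trG2[of "x * d1"] idv[OF xd(1)] m[OF tA(1) dL(1)] m[OF tA(2) dL(1)] m[OF tA(3) dL(1)] t1d t2d t3d
      by (simp add: algebra_simps)
    have r2: "trL L (x * d2) = (x - t1 x + t2 x - t3 x) * d2"
      using trG2[of "x * d2"] idv[OF xd(2)] m[OF tA(1) dL(2)] m[OF tA(2) dL(2)] m[OF tA(3) dL(2)] t1d t2d t3d
      by (simp add: algebra_simps)
    have r3: "trL L (x * d3) = (x - t1 x - t2 x + t3 x) * d3"
      using trG2[of "x * d3"] idv[OF xd(3)] m[OF tA(1) dL(3)] m[OF tA(2) dL(3)] m[OF tA(3) dL(3)] t1d t2d t3d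
      by (simp add: algebra_simps)
    show ?thesis using r1 r2 r3 dz trG2[of x] idv[OF x] by simp
  qed
  have AG: "A = {idL L, t1, t2, t3}"
  proof
    show "{idL L, t1, t2, t3} \<subseteq> A" using G2 GA by auto
  next
    show "A \<subseteq> {idL L, t1, t2, t3}"
    proof
      fix \<tau> assume tau: "\<tau> \<in> A"
      have "\<tau> d123 = d123" using emb_Rats[OF L emA[OF tau] d123Q] .
      then have e123: "e1 \<tau> * e2 \<tau> * e3 \<tau> = 1" using pr3[OF tau] d123z by simp
      have "\<exists>h\<in>{idL L, t1, t2, t3}. h d1 = \<tau> d1 \<and> h d2 = \<tau> d2 \<and> h d3 = \<tau> d3"
      proof -
        have sgt: "(e1 \<tau> = 1 \<or> e1 \<tau> = -1)" "(e2 \<tau> = 1 \<or> e2 \<tau> = -1)" "(e3 \<tau> = 1 \<or> e3 \<tau> = -1)"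
          "\<tau> d1 = e1 \<tau> * d1" "\<tau> d2 = e2 \<tau> * d2" "\<tau> d3 = e3 \<tau> * d3" using sg[OF tau] by auto
        have i0: "idL L d1 = d1" "idL L d2 = d2" "idL L d3 = d3" using idv dL by auto
        show ?thesis using sgt e123 i0 t1d t2d t3d by (elim disjE) auto
      qed
      then obtain h where h: "h \<in> {idL L, t1, t2, t3}" "h d1 = \<tau> d1" "h d2 = \<tau> d2" "h d3 = \<tau> d3" by blast
      have hA: "h \<in> A" using h(1) tA idA by auto
      have "\<tau> = h"
      proof
        fix x show "\<tau> x = h x"
        proof (cases "x \<in> L")
          case True
          have q: "trL L x \<in> \<rat>" "trL L (x * d1) \<in> \<rat>" "trL L (x * d2) \<in> \<rat>" "trL L (x * d3) \<in> \<rat>"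
            using trQ True dL rsf_mult[OF L] by auto
          show ?thesis
            by (rule agree[OF L emA[OF tau] emA[OF hA] True dL q dec[OF True]]) (use h in auto)
        next
          case False
          then show ?thesis using emb_out[OF emA[OF tau]] emb_out[OF emA[OF hA]] by simp
        qed
      qed
      then show "\<tau> \<in> {idL L, t1, t2, t3}" using h(1) by simp
    qed
  qed
  have ug: "u1 > 1" "u2 > 1" "u3 > 1" using fu1 fu2 fu3 by (auto simp: fundamental_unit_def)
  obtain p1 q1 where U1: "p1 \<in> \<rat>" "q1 \<in> \<rat>" "u1 = p1 + q1 * d1" "\<bar>p1 - q1 * d1\<bar> = inverse u1"
    using unit_conj[OF L emA[OF tA(2)] KL1 D1(4) D1(2) D1(3) t2d(1) fu1] by blast
  obtain p2 q2 where U2: "p2 \<in> \<rat>" "q2 \<in> \<rat>" "u2 = p2 + q2 * d2" "\<bar>p2 - q2 * d2\<bar> = inverse u2"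
    using unit_conj[OF L emA[OF tA(1)] KL2 D2(4) D2(2) D2(3) t1d(2) fu2] by blast
  obtain p3 q3 where U3: "p3 \<in> \<rat>" "q3 \<in> \<rat>" "u3 = p3 + q3 * d3" "\<bar>p3 - q3 * d3\<bar> = inverse u3"
    using unit_conj[OF L emA[OF tA(1)] KL3 D3(4) D3(2) D3(3) t1d(3) fu3] by blast
  have i0: "idL L d1 = d1" "idL L d2 = d2" "idL L d3 = d3" using idv dL by auto
  note LU1 = LOG_unit[OF L _ dL(1) U1 ug(1)]
  note LU2 = LOG_unit[OF L _ dL(2) U2 ug(2)]
  note LU3 = LOG_unit[OF L _ dL(3) U3 ug(3)]
  have idE: "idL L \<in> real_embeddings L" using emA idA by simp
  have tE: "t1 \<in> real_embeddings L" "t2 \<in> real_embeddings L" "t3 \<in> real_embeddings L" using emA tA by auto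
  show ?thesis
    apply (rule exI[of _ "idL L"], rule exI[of _ t1], rule exI[of _ t2], rule exI[of _ t3])
    using AG tdist unfolding A_def
    using LU1(1)[OF idE i0(1)] LU2(1)[OF idE i0(2)] LU3(1)[OF idE i0(3)]
      LU1(1)[OF tE(1) t1d(1)] LU2(2)[OF tE(1) t1d(2)] LU3(2)[OF tE(1) t1d(3)]
      LU1(2)[OF tE(2) t2d(1)] LU2(1)[OF tE(2) t2d(2)] LU3(2)[OF tE(2) t2d(3)]
      LU1(2)[OF tE(3) t3d(1)] LU2(2)[OF tE(3) t3d(2)] LU3(1)[OF tE(3) t3d(3)]
    by simp
qed


lemma abs_pm: "\<bar>x + y\<bar> + \<bar>x - y\<bar> = 2 * max \<bar>x\<bar> \<bar>y::real\<bar>"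
  by (simp add: max_def) arith

lemma final_norm:
  fixes A B C :: real
  shows "\<bar>-2*B-2*C\<bar> + \<bar>-2*A+2*C\<bar> + \<bar>2*A+2*B\<bar> + \<bar>2*A-2*B\<bar> + \<bar>-2*A-2*C\<bar> + \<bar>-2*B+2*C\<bar>
      = 4 * (max \<bar>B\<bar> \<bar>C\<bar> + max \<bar>A\<bar> \<bar>B\<bar> + max \<bar>A\<bar> \<bar>C\<bar>)"
proof -
  have "\<bar>-2*B-2*C\<bar> = 2 * \<bar>B + C\<bar>" by (cases "B + C \<ge> 0") (simp_all add: abs_if)
  moreover have "\<bar>-2*A+2*C\<bar> = 2 * \<bar>A - C\<bar>" by (cases "A - C \<ge> 0") (simp_all add: abs_if)
  moreover have "\<bar>2*A+2*B\<bar> = 2 * \<bar>A + B\<bar>" by (cases "A + B \<ge> 0") (simp_all add: abs_if)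
  moreover have "\<bar>2*A-2*B\<bar> = 2 * \<bar>A - B\<bar>" by (cases "A - B \<ge> 0") (simp_all add: abs_if)
  moreover have "\<bar>-2*A-2*C\<bar> = 2 * \<bar>A + C\<bar>" by (cases "A + C \<ge> 0") (simp_all add: abs_if)
  moreover have "\<bar>-2*B+2*C\<bar> = 2 * \<bar>B - C\<bar>" by (cases "B - C \<ge> 0") (simp_all add: abs_if)
  ultimately have e: "\<bar>-2*B-2*C\<bar> + \<bar>-2*A+2*C\<bar> + \<bar>2*A+2*B\<bar> + \<bar>2*A-2*B\<bar> + \<bar>-2*A-2*C\<bar> + \<bar>-2*B+2*C\<bar>
     = 2 * ((\<bar>B + C\<bar> + \<bar>B - C\<bar>) + (\<bar>A + B\<bar> + \<bar>A - B\<bar>) + (\<bar>A + C\<bar> + \<bar>A - C\<bar>))" by simp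
  show ?thesis unfolding e abs_pm by simp
qed

lemma max_ineq:
  fixes a b c :: real
  shows "4 * (max \<bar>b\<bar> \<bar>c\<bar> + max \<bar>a\<bar> \<bar>b\<bar> + max \<bar>a\<bar> \<bar>c\<bar>) \<ge> 8 * max \<bar>a\<bar> (max \<bar>b\<bar> \<bar>c\<bar>)"
  by (simp add: max_def)

lemma part1:
  fixes L :: "real set" and t0 t1 t2 t3 :: "real \<Rightarrow> real" and l1 l2 l3 :: real and n1 n2 n3 :: int
  assumes A: "real_embeddings L = {t0,t1,t2,t3}" and d: "distinct [t0,t1,t2,t3]"
    and V: "LOG L u1 t0 = l1" "LOG L u2 t0 = l2" "LOG L u3 t0 = l3"
      "LOG L u1 t1 = l1" "LOG L u2 t1 = - l2" "LOG L u3 t1 = - l3"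
      "LOG L u1 t2 = - l1" "LOG L u2 t2 = l2" "LOG L u3 t2 = - l3"
      "LOG L u1 t3 = - l1" "LOG L u2 t3 = - l2" "LOG L u3 t3 = l3"
  shows "norm1 (real_embeddings L) (\<lambda>v x. of_int n1 * wedge (LOG L u2) (LOG L u3) v x
                        + of_int n2 * wedge (LOG L u1) (LOG L u3) v x
                        + of_int n3 * wedge (LOG L u1) (LOG L u2) v x)
     = 4 * ((max \<bar>of_int n2 * (l1 * l3)\<bar> \<bar>of_int n3 * (l1 * l2)\<bar>) + (max \<bar>of_int n1 * (l2 * l3)\<bar> \<bar>of_int n2 * (l1 * l3)\<bar>)
                                + (max \<bar>of_int n1 * (l2 * l3)\<bar> \<bar>of_int n3 * (l1 * l2)\<bar>))"
proof -
  define W where "W = (\<lambda>v x. of_int n1 * wedge (LOG L u2) (LOG L u3) v x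
                        + of_int n2 * wedge (LOG L u1) (LOG L u3) v x
                        + of_int n3 * wedge (LOG L u1) (LOG L u2) v x)"
  define a where "a = of_int n1 * (l2 * l3)"
  define b where "b = of_int n2 * (l1 * l3)"
  define c where "c = of_int n3 * (l1 * l2)"
  have sym: "\<bar>W y x\<bar> = \<bar>W x y\<bar>" for x y
  proof -
    have "W y x = - W x y" by (simp add: W_def wedge_def algebra_simps)
    then show ?thesis by simp
  qed
  have w: "W t0 t1 = -2*b-2*c" "W t0 t2 = -2*a+2*c" "W t0 t3 = 2*a+2*b"
    "W t1 t2 = 2*a-2*b" "W t1 t3 = -2*a-2*c" "W t2 t3 = -2*b+2*c"
    by (simp_all add: W_def wedge_def V a_def b_def c_def algebra_simps)
  have "norm1 (real_embeddings L) W = \<bar>W t0 t1\<bar> + \<bar>W t0 t2\<bar> + \<bar>W t0 t3\<bar> + \<bar>W t1 t2\<bar> + \<bar>W t1 t3\<bar> + \<bar>W t2 t3\<bar>"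
    unfolding A by (rule norm1_four[OF d sym])
  also have "\<dots> = 4 * (max \<bar>b\<bar> \<bar>c\<bar> + max \<bar>a\<bar> \<bar>b\<bar> + max \<bar>a\<bar> \<bar>c\<bar>)"
    unfolding w by (rule final_norm)
  finally show ?thesis unfolding W_def a_def b_def c_def .
qed

lemma LOG_prod:
  assumes L: "real_subfield L" and x: "x1 \<in> L" "x2 \<in> L" "x3 \<in> L" "x1 \<noteq> 0" "x2 \<noteq> 0" "x3 \<noteq> 0"
  shows "LOG L (x1 powi m1 * x2 powi m2 * x3 powi m3) \<tau> =
     of_int m1 * LOG L x1 \<tau> + of_int m2 * LOG L x2 \<tau> + of_int m3 * LOG L x3 \<tau>"
proof (cases "\<tau> \<in> real_embeddings L")
  case False then show ?thesis by (simp add: LOG_def)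
next
  case True
  have p: "x1 powi m1 \<in> L" "x2 powi m2 \<in> L" "x3 powi m3 \<in> L" using rsf_powi[OF L] x by auto
  have nz: "\<tau> x1 \<noteq> 0" "\<tau> x2 \<noteq> 0" "\<tau> x3 \<noteq> 0" using emb_nonzero[OF L True] x by auto
  have "\<tau> (x1 powi m1 * x2 powi m2 * x3 powi m3) = \<tau> x1 powi m1 * \<tau> x2 powi m2 * \<tau> x3 powi m3"
    using emb_mult[OF True] p rsf_mult[OF L] emb_powi[OF L True] x by simp
  then have "\<bar>\<tau> (x1 powi m1 * x2 powi m2 * x3 powi m3)\<bar> = \<bar>\<tau> x1\<bar> powi m1 * \<bar>\<tau> x2\<bar> powi m2 * \<bar>\<tau> x3\<bar> powi m3"
    by (simp add: abs_mult power_int_abs)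
  then have "ln \<bar>\<tau> (x1 powi m1 * x2 powi m2 * x3 powi m3)\<bar> = of_int m1 * ln \<bar>\<tau> x1\<bar> + of_int m2 * ln \<bar>\<tau> x2\<bar> + of_int m3 * ln \<bar>\<tau> x3\<bar>"
    using nz by (simp add: ln_mult ln_powi)
  then show ?thesis using True by (simp add: LOG_def)
qed


lemma wedge_expand:
  fixes k m1 m2 m3 n1 n2 n3 :: int and A1 A2 A3 B1 B2 B3 :: real
  shows "of_int k * ((of_int m1 * A1 + of_int m2 * A2 + of_int m3 * A3) * (of_int n1 * B1 + of_int n2 * B2 + of_int n3 * B3)
      - (of_int m1 * B1 + of_int m2 * B2 + of_int m3 * B3) * (of_int n1 * A1 + of_int n2 * A2 + of_int n3 * A3))
   = of_int (k * (m2 * n3 - m3 * n2)) * (A2 * B3 - B2 * A3) + of_int (k * (m1 * n3 - m3 * n1)) * (A1 * B3 - B1 * A3)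
     + of_int (k * (m1 * n2 - m2 * n1)) * (A1 * B2 - B1 * A2)"
  by (simp add: algebra_simps)

lemma absN: "N \<noteq> 0 \<Longrightarrow> X \<ge> 0 \<Longrightarrow> \<bar>real_of_int N * X\<bar> \<ge> X"
proof -
  assume N: "N \<noteq> 0" and X: "X \<ge> 0"
  have "(1::real) \<le> of_int \<bar>N\<bar>" using N by (simp add: of_int_1_le_iff)
  then have "1 * X \<le> of_int \<bar>N\<bar> * X" using X by (rule mult_right_mono)
  then show ?thesis using X by (simp add: abs_mult)
qed

lemma fin_ineq:
  fixes l1 l2 l3 :: real
  assumes "l1 > 0" "l2 > 0" "l1 \<le> l3" "l2 \<le> l3" "N1 \<noteq> 0 \<or> N2 \<noteq> 0 \<or> N3 \<noteq> 0"
  shows "8 * max \<bar>of_int N1 * (l2 * l3)\<bar> (max \<bar>of_int N2 * (l1 * l3)\<bar> \<bar>of_int N3 * (l1 * l2)\<bar>) \<ge> 8 * l1 * l2"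
proof -
  have x1: "l2 * l3 \<ge> l1 * l2" using assms by (simp add: mult_left_mono mult.commute)
  have x2: "l1 * l3 \<ge> l1 * l2" using assms by (simp add: mult_left_mono)
  have p: "l2 * l3 \<ge> 0" "l1 * l3 \<ge> 0" "l1 * l2 \<ge> 0" using assms by auto
  have "max \<bar>of_int N1 * (l2 * l3)\<bar> (max \<bar>of_int N2 * (l1 * l3)\<bar> \<bar>of_int N3 * (l1 * l2)\<bar>) \<ge> l1 * l2"
    using assms(5)
  proof (elim disjE)
    assume "N1 \<noteq> 0" then show ?thesis using absN[OF _ p(1), of N1] x1 by (simp add: le_max_iff_disj)
  next
    assume "N2 \<noteq> 0" then show ?thesis using absN[OF _ p(2), of N2] x2 by (simp add: le_max_iff_disj)
  next
    assume "N3 \<noteq> 0" then show ?thesis using absN[OF _ p(3), of N3] by (simp add: le_max_iff_disj)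
  qed
  then show ?thesis by simp
qed

theorem mainTheorem5:
  fixes L K1 K2 K3 :: "real set" and u1 u2 u3 :: real
  assumes "real_subfield L"
    and "galois_over_Q L"
    and "aut_group L \<cong> DirProd (integer_mod_group 2) (integer_mod_group 2)"
    and "quadratic_subfield L K1" and "quadratic_subfield L K2" and "quadratic_subfield L K3"
    and "K1 \<noteq> K2" and "K1 \<noteq> K3" and "K2 \<noteq> K3"
    and "fundamental_unit K1 u1" and "fundamental_unit K2 u2" and "fundamental_unit K3 u3"
    and "u1 < u2" and "u2 < u3"
  defines "E \<equiv> {u1 powi m1 * u2 powi m2 * u3 powi m3 | m1 m2 m3 :: int. True}"
    and "X1 \<equiv> ln u2 * ln u3" and "X2 \<equiv> ln u1 * ln u3" and "X3 \<equiv> ln u1 * ln u2"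
    and "A \<equiv> real_embeddings L"
  shows "(\<forall>n1 n2 n3 :: int.
           let w = (\<lambda>v x. of_int n1 * wedge (LOG L u2) (LOG L u3) v x
                        + of_int n2 * wedge (LOG L u1) (LOG L u3) v x
                        + of_int n3 * wedge (LOG L u1) (LOG L u2) v x)
           in norm1 A w = 4 * ((max \<bar>of_int n2 * X2\<bar> \<bar>of_int n3 * X3\<bar>) + (max \<bar>of_int n1 * X1\<bar> \<bar>of_int n2 * X2\<bar>)
                                + (max \<bar>of_int n1 * X1\<bar> \<bar>of_int n3 * X3\<bar>))
            \<and> 4 * ((max \<bar>of_int n2 * X2\<bar> \<bar>of_int n3 * X3\<bar>) + (max \<bar>of_int n1 * X1\<bar> \<bar>of_int n2 * X2\<bar>)
                                + (max \<bar>of_int n1 * X1\<bar> \<bar>of_int n3 * X3\<bar>))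
               \<ge> 8 * max \<bar>of_int n1 * X1\<bar> ((max \<bar>of_int n2 * X2\<bar> \<bar>of_int n3 * X3\<bar>)))
       \<and> (\<forall>w \<in> wedge2_LOG L E. w \<noteq> (\<lambda>v x. 0) \<longrightarrow> norm1 A w \<ge> 8 * ln u1 * ln u2)"
proof -
  note L = assms(1)
  have Edef: "E = {u1 powi m1 * u2 powi m2 * u3 powi m3 | m1 m2 m3 :: int. True}" using assms(15) by simp
  have XA: "X1 = ln u2 * ln u3" "X2 = ln u1 * ln u3" "X3 = ln u1 * ln u2" "A = real_embeddings L"
    using assms(16-19) by simp_all
  obtain t0 t1 t2 t3 where S: "real_embeddings L = {t0,t1,t2,t3}" "distinct [t0,t1,t2,t3]"
    and V: "LOG L u1 t0 = ln u1" "LOG L u2 t0 = ln u2" "LOG L u3 t0 = ln u3"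
      "LOG L u1 t1 = ln u1" "LOG L u2 t1 = - ln u2" "LOG L u3 t1 = - ln u3"
      "LOG L u1 t2 = - ln u1" "LOG L u2 t2 = ln u2" "LOG L u3 t2 = - ln u3"
      "LOG L u1 t3 = - ln u1" "LOG L u2 t3 = - ln u2" "LOG L u3 t3 = ln u3"
  proof -
    from structure_lemma[OF assms(1-12)] obtain t0 t1 t2 t3 where H: "real_embeddings L = {t0,t1,t2,t3} \<and> distinct [t0,t1,t2,t3] \<and>
      LOG L u1 t0 = ln u1 \<and> LOG L u2 t0 = ln u2 \<and> LOG L u3 t0 = ln u3 \<and>
      LOG L u1 t1 = ln u1 \<and> LOG L u2 t1 = - ln u2 \<and> LOG L u3 t1 = - ln u3 \<and>
      LOG L u1 t2 = - ln u1 \<and> LOG L u2 t2 = ln u2 \<and> LOG L u3 t2 = - ln u3 \<and>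
      LOG L u1 t3 = - ln u1 \<and> LOG L u2 t3 = - ln u2 \<and> LOG L u3 t3 = ln u3" by (elim exE)
    then show ?thesis by (intro that[of t0 t1 t2 t3]) simp_all
  qed
  have P1: "norm1 A (\<lambda>v x. of_int n1 * wedge (LOG L u2) (LOG L u3) v x
                        + of_int n2 * wedge (LOG L u1) (LOG L u3) v x
                        + of_int n3 * wedge (LOG L u1) (LOG L u2) v x)
     = 4 * ((max \<bar>of_int n2 * X2\<bar> \<bar>of_int n3 * X3\<bar>) + (max \<bar>of_int n1 * X1\<bar> \<bar>of_int n2 * X2\<bar>)
                                + (max \<bar>of_int n1 * X1\<bar> \<bar>of_int n3 * X3\<bar>))" for n1 n2 n3 :: int
    unfolding XA by (rule part1[OF S V])
  have ug: "u1 > 1" "u2 > 1" "u3 > 1" using assms(10-12) by (auto simp: fundamental_unit_def)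
  have lg: "ln u1 > 0" "ln u2 > 0" "ln u3 > 0" using ug by auto
  have l13: "ln u1 \<le> ln u3" "ln u2 \<le> ln u3" using ug assms(13,14) by auto
  have KL: "K1 \<subseteq> L" "K2 \<subseteq> L" "K3 \<subseteq> L" using assms(4-6) by (auto simp: quadratic_subfield_def)
  have uK: "u1 \<in> K1" "u2 \<in> K2" "u3 \<in> K3" using assms(10-12) by (simp_all add: fundamental_unit_def int_units_def)
  have uL: "u1 \<in> L" "u2 \<in> L" "u3 \<in> L" using KL uK by auto
  have u0: "u1 \<noteq> 0" "u2 \<noteq> 0" "u3 \<noteq> 0" using ug by auto
  show ?thesis
  proof (intro conjI allI ballI impI)
    fix n1 n2 n3 :: int
    show "let w = (\<lambda>v x. of_int n1 * wedge (LOG L u2) (LOG L u3) v x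
                        + of_int n2 * wedge (LOG L u1) (LOG L u3) v x
                        + of_int n3 * wedge (LOG L u1) (LOG L u2) v x)
           in norm1 A w = 4 * ((max \<bar>of_int n2 * X2\<bar> \<bar>of_int n3 * X3\<bar>) + (max \<bar>of_int n1 * X1\<bar> \<bar>of_int n2 * X2\<bar>)
                                + (max \<bar>of_int n1 * X1\<bar> \<bar>of_int n3 * X3\<bar>))
            \<and> 4 * ((max \<bar>of_int n2 * X2\<bar> \<bar>of_int n3 * X3\<bar>) + (max \<bar>of_int n1 * X1\<bar> \<bar>of_int n2 * X2\<bar>)
                                + (max \<bar>of_int n1 * X1\<bar> \<bar>of_int n3 * X3\<bar>))
               \<ge> 8 * max \<bar>of_int n1 * X1\<bar> ((max \<bar>of_int n2 * X2\<bar> \<bar>of_int n3 * X3\<bar>))"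
      unfolding Let_def by (rule conjI[OF P1 max_ineq])
  next
    fix w assume wE: "w \<in> wedge2_LOG L E" and wne: "w \<noteq> (\<lambda>v x. 0)"
    obtain n k a b where w: "w = (\<lambda>v x. \<Sum>i<(n::nat). of_int (k i) * wedge (LOG L (a i)) (LOG L (b i)) v x)"
      and ab: "\<forall>i<n. a i \<in> E \<and> b i \<in> E"
      using wE unfolding wedge2_LOG_def mem_Collect_eq by (elim exE conjE) blast
    have exm: "\<exists>m. c = u1 powi fst m * u2 powi fst (snd m) * u3 powi snd (snd m)" if cE: "c \<in> E" for c
    proof -
      obtain m1 m2 m3 where "c = u1 powi m1 * u2 powi m2 * u3 powi m3" using cE Edef by blast
      then show ?thesis by (intro exI[of _ "(m1,m2,m3)"]) simp
    qed
    have "\<forall>i\<in>{..<n}. \<exists>m. a i = u1 powi fst m * u2 powi fst (snd m) * u3 powi snd (snd m)"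
      by (intro ballI exm) (use ab in auto)
    from bchoice[OF this] obtain ma where ma: "\<forall>i\<in>{..<n}. a i = u1 powi fst (ma i) * u2 powi fst (snd (ma i)) * u3 powi snd (snd (ma i))"
      by blast
    have "\<forall>i\<in>{..<n}. \<exists>m. b i = u1 powi fst m * u2 powi fst (snd m) * u3 powi snd (snd m)"
      by (intro ballI exm) (use ab in auto)
    from bchoice[OF this] obtain mb where mb: "\<forall>i\<in>{..<n}. b i = u1 powi fst (mb i) * u2 powi fst (snd (mb i)) * u3 powi snd (snd (mb i))"
      by blast
    note LP = LOG_prod[OF L uL u0]
    define N1 where "N1 = (\<Sum>i<n. k i * (fst (snd (ma i)) * snd (snd (mb i)) - snd (snd (ma i)) * fst (snd (mb i))))"
    define N2 where "N2 = (\<Sum>i<n. k i * (fst (ma i) * snd (snd (mb i)) - snd (snd (ma i)) * fst (mb i)))"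
    define N3 where "N3 = (\<Sum>i<n. k i * (fst (ma i) * fst (snd (mb i)) - fst (snd (ma i)) * fst (mb i)))"
    have wW: "w = (\<lambda>v x. of_int N1 * wedge (LOG L u2) (LOG L u3) v x
                        + of_int N2 * wedge (LOG L u1) (LOG L u3) v x
                        + of_int N3 * wedge (LOG L u1) (LOG L u2) v x)"
    proof (intro ext)
      fix v x
      have "w v x = (\<Sum>i<n. of_int (k i * (fst (snd (ma i)) * snd (snd (mb i)) - snd (snd (ma i)) * fst (snd (mb i)))) * wedge (LOG L u2) (LOG L u3) v x
          + of_int (k i * (fst (ma i) * snd (snd (mb i)) - snd (snd (ma i)) * fst (mb i))) * wedge (LOG L u1) (LOG L u3) v x
          + of_int (k i * (fst (ma i) * fst (snd (mb i)) - fst (snd (ma i)) * fst (mb i))) * wedge (LOG L u1) (LOG L u2) v x)"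
        unfolding w
      proof (rule sum.cong[OF refl])
        fix i assume i: "i \<in> {..<n}"
        show "of_int (k i) * wedge (LOG L (a i)) (LOG L (b i)) v x = 
          of_int (k i * (fst (snd (ma i)) * snd (snd (mb i)) - snd (snd (ma i)) * fst (snd (mb i)))) * wedge (LOG L u2) (LOG L u3) v x
          + of_int (k i * (fst (ma i) * snd (snd (mb i)) - snd (snd (ma i)) * fst (mb i))) * wedge (LOG L u1) (LOG L u3) v x
          + of_int (k i * (fst (ma i) * fst (snd (mb i)) - fst (snd (ma i)) * fst (mb i))) * wedge (LOG L u1) (LOG L u2) v x"
        proof -
          have ai: "a i = u1 powi fst (ma i) * u2 powi fst (snd (ma i)) * u3 powi snd (snd (ma i))" using ma i by blast
          have bi: "b i = u1 powi fst (mb i) * u2 powi fst (snd (mb i)) * u3 powi snd (snd (mb i))" using mb i by blast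
          show ?thesis unfolding wedge_def ai bi LP by (rule wedge_expand)
        qed
      qed
      also have "\<dots> = of_int N1 * wedge (LOG L u2) (LOG L u3) v x
                        + of_int N2 * wedge (LOG L u1) (LOG L u3) v x
                        + of_int N3 * wedge (LOG L u1) (LOG L u2) v x"
        unfolding N1_def N2_def N3_def by (simp add: sum.distrib sum_distrib_right)
      finally show "w v x = \<dots>" .
    qed
    have Nnz: "N1 \<noteq> 0 \<or> N2 \<noteq> 0 \<or> N3 \<noteq> 0"
    proof (rule ccontr)
      assume "\<not> (N1 \<noteq> 0 \<or> N2 \<noteq> 0 \<or> N3 \<noteq> 0)"
      then have "w = (\<lambda>v x. 0)" unfolding wW by simp
      then show False using wne by simp
    qed
    have "norm1 A w = 4 * ((max \<bar>of_int N2 * X2\<bar> \<bar>of_int N3 * X3\<bar>) + (max \<bar>of_int N1 * X1\<bar> \<bar>of_int N2 * X2\<bar>)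
                                + (max \<bar>of_int N1 * X1\<bar> \<bar>of_int N3 * X3\<bar>))"
      unfolding wW by (rule P1)
    also have "\<dots> \<ge> 8 * max \<bar>of_int N1 * X1\<bar> ((max \<bar>of_int N2 * X2\<bar> \<bar>of_int N3 * X3\<bar>))"
      by (rule max_ineq)
    moreover have "8 * max \<bar>of_int N1 * X1\<bar> ((max \<bar>of_int N2 * X2\<bar> \<bar>of_int N3 * X3\<bar>)) \<ge> 8 * ln u1 * ln u2"
      unfolding XA by (rule fin_ineq[OF lg(1) lg(2) l13 Nnz])
    ultimately show "norm1 A w \<ge> 8 * ln u1 * ln u2" by linarith
  qed
qed


thm_deps mainTheorem5

end
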